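(* Let $(A,q)$ be a metric group and let $n$ be the exponent of $A$. Then $(A,q)$ is isotropically generated if and only if (i) $q^n=1$, and (ii) $(A,q)$ contains a hyperbolic metric subgroup isomorphic to $(\mathbb{Z}/n\mathbb{Z}\times\mathbb{Z}/n\mathbb{Z},h)$, where $h(x,y)=\zeta^{xy}$ for a primitive $n$th root of unity $\zeta$.
   Context: $k$ is an algebraically closed field of characteristic $0$. A pre-metric group $(A,q)$ is a finite Abelian group $A$ with a quadratic form $q:A\to k^\times$; it is a metric group if $q$ is non-degenerate (its associated bilinear form $B(x,y)=q(x+y)/(q(x)q(y))$ is non-degenerate). $x\in A$ is isotropic if $q(x)=1$; $(A,q)$ is isotropically generated if $A$ is generated by its isotropic elements. A metric subgroup isomorphic to $(\mathbb{Z}/n\mathbb{Z}\times\mathbb{Z}/n\mathbb{Z},h)$ means a subgroup on which the restriction of $q$ is isomorphic to $h$. *)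

theory Defs
  imports "HOL-Computational_Algebra.Polynomial"
begin

definition alg_closed :: "'k::field itself \<Rightarrow> bool" where
  "alg_closed _ \<longleftrightarrow> (\<forall>p::'k poly. degree p > 0 \<longrightarrow> (\<exists>x. poly p x = 0))"

definition natmul :: "nat \<Rightarrow> 'a::ab_group_add \<Rightarrow> 'a" where
  "natmul n x = (((+) x) ^^ n) 0"

definition group_exponent :: "'a::{ab_group_add,finite} itself \<Rightarrow> nat" where
  "group_exponent _ = (LEAST n. n > 0 \<and> (\<forall>x::'a. natmul n x = 0))"

definition is_subgroup :: "'a::ab_group_add set \<Rightarrow> bool" where
  "is_subgroup H \<longleftrightarrow> 0 \<in> H \<and> (\<forall>x\<in>H. \<forall>y\<in>H. x + y \<in> H) \<and> (\<forall>x\<in>H. - x \<in> H)"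

definition generated_subgroup :: "'a::ab_group_add set \<Rightarrow> 'a set" where
  "generated_subgroup S = \<Inter>{H. is_subgroup H \<and> S \<subseteq> H}"

definition assoc_bilin :: "('a::ab_group_add \<Rightarrow> 'k::field) \<Rightarrow> 'a \<Rightarrow> 'a \<Rightarrow> 'k" where
  "assoc_bilin q x y = q (x + y) / (q x * q y)"

definition quadratic_form :: "('a::ab_group_add \<Rightarrow> 'k::field) \<Rightarrow> bool" where
  "quadratic_form q \<longleftrightarrow> (\<forall>x. q x \<noteq> 0) \<and> (\<forall>x. q (- x) = q x) \<and>
     (\<forall>x y z. assoc_bilin q (x + y) z = assoc_bilin q x z * assoc_bilin q y z) \<and>
     (\<forall>x y z. assoc_bilin q x (y + z) = assoc_bilin q x y * assoc_bilin q x z)"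

definition nondegenerate :: "('a::ab_group_add \<Rightarrow> 'k::field) \<Rightarrow> bool" where
  "nondegenerate q \<longleftrightarrow> (\<forall>x. (\<forall>y. assoc_bilin q x y = 1) \<longrightarrow> x = 0)"

definition metric_group :: "('a::{ab_group_add,finite} \<Rightarrow> 'k::field) \<Rightarrow> bool" where
  "metric_group q \<longleftrightarrow> quadratic_form q \<and> nondegenerate q"

definition isotropically_generated :: "('a::ab_group_add \<Rightarrow> 'k::field) \<Rightarrow> bool" where
  "isotropically_generated q \<longleftrightarrow> generated_subgroup {x. q x = 1} = UNIV"

definition primitive_root :: "nat \<Rightarrow> 'k::field \<Rightarrow> bool" where
  "primitive_root n z \<longleftrightarrow> z ^ n = 1 \<and> (\<forall>m. 0 < m \<and> m < n \<longrightarrow> z ^ m \<noteq> 1)"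

text \<open>Z/nZ \<times> Z/nZ is modelled by pairs in {..<n} \<times> {..<n} with addition mod n.
  (A,q) contains a metric subgroup isomorphic to (Z/nZ \<times> Z/nZ, h): there is a subgroup H
  and a group isomorphism \<phi> from Z/nZ \<times> Z/nZ onto H with q \<circ> \<phi> = h.\<close>
definition contains_metric_subgroup_iso ::
    "('a::ab_group_add \<Rightarrow> 'k::field) \<Rightarrow> nat \<Rightarrow> (nat \<times> nat \<Rightarrow> 'k) \<Rightarrow> bool" where
  "contains_metric_subgroup_iso q n h \<longleftrightarrow>
     (\<exists>H \<phi>. is_subgroup H \<and> bij_betw \<phi> ({..<n} \<times> {..<n}) H \<and>
        (\<forall>a\<in>{..<n}. \<forall>b\<in>{..<n}. \<forall>c\<in>{..<n}. \<forall>d\<in>{..<n}.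
            \<phi> ((a + c) mod n, (b + d) mod n) = \<phi> (a, b) + \<phi> (c, d)) \<and>
        (\<forall>a\<in>{..<n}. \<forall>b\<in>{..<n}. q (\<phi> (a, b)) = h (a, b)))"

definition hyperbolic_form :: "'k::field \<Rightarrow> nat \<times> nat \<Rightarrow> 'k" where
  "hyperbolic_form \<zeta> = (\<lambda>(x, y). \<zeta> ^ (x * y))"

end

theory Submission
  imports Defs "HOL-Computational_Algebra.Primes"
begin

lemma natmul_0[simp]: "natmul 0 x = 0"
  by (simp add: natmul_def)

lemma natmul_Suc: "natmul (Suc k) x = x + natmul k x"
  by (simp add: natmul_def)

lemma natmul_add_nat: "natmul (a + b) x = natmul a x + natmul b x"
  by (induction a) (simp_all add: natmul_Suc add.assoc)

lemma natmul_mult: "natmul (a * b) x = natmul a (natmul b x)"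
  by (induction a) (simp_all add: natmul_Suc natmul_add_nat)

lemma natmul_zero[simp]: "natmul k (0::'a::ab_group_add) = 0"
  by (induction k) (simp_all add: natmul_Suc)

lemma natmul_1[simp]: "natmul 1 x = x"
  by (simp add: natmul_def)

lemma natmul_distrib: "natmul k (x + y) = natmul k x + natmul k (y::'a::ab_group_add)"
  by (induction k) (simp_all add: natmul_Suc algebra_simps)

lemma natmul_neg: "natmul k (- x) = - natmul k (x::'a::ab_group_add)"
  by (induction k) (simp_all add: natmul_Suc algebra_simps)

lemma natmul_mod:
  assumes "natmul n x = 0"
  shows "natmul k x = natmul (k mod n) x"
proof -
  have "natmul k x = natmul ((k div n) * n + k mod n) x" by simp
  also have "\<dots> = natmul (k mod n) x"
    by (simp only: natmul_add_nat natmul_mult assms natmul_zero) simp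
  finally show ?thesis .
qed

lemma subgroup_natmul: "is_subgroup H \<Longrightarrow> x \<in> H \<Longrightarrow> natmul k x \<in> H"
  by (induction k) (auto simp: is_subgroup_def natmul_Suc)

lemma gen_sub: "is_subgroup (generated_subgroup S)"
  unfolding is_subgroup_def generated_subgroup_def by blast

lemma gen_incl: "S \<subseteq> generated_subgroup S"
  unfolding generated_subgroup_def by blast

lemma gen_least: "is_subgroup H \<Longrightarrow> S \<subseteq> H \<Longrightarrow> generated_subgroup S \<subseteq> H"
  unfolding generated_subgroup_def by blast

lemma exists_annihilator:
  "\<exists>N>0. \<forall>x::'a::{ab_group_add,finite}. natmul N x = 0"
proof -
  define c where "c = card (UNIV::'a set)"
  have per: "\<exists>d. 0 < d \<and> d \<le> c \<and> natmul d x = 0" for x :: 'a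
  proof -
    have "\<not> inj_on (\<lambda>k. natmul k x) {..c}"
    proof
      assume "inj_on (\<lambda>k. natmul k x) {..c}"
      then have "card {..c} \<le> card (UNIV::'a set)"
        by (rule card_inj_on_le) auto
      then show False by (simp add: c_def)
    qed
    then obtain i j where ij: "i \<le> c" "j \<le> c" "i \<noteq> j" "natmul i x = natmul j x"
      unfolding inj_on_def by auto
    show ?thesis
    proof (cases "i < j")
      case True
      have "natmul j x = natmul (j - i) x + natmul i x"
        using True by (metis le_add_diff_inverse2 less_imp_le natmul_add_nat)
      then have "natmul (j - i) x = 0" using ij by simp
      then show ?thesis using True ij by (intro exI[of _ "j - i"]) auto
    next
      case False
      then have T: "j < i" using ij by simp
      have "natmul i x = natmul (i - j) x + natmul j x"
        using T by (metis le_add_diff_inverse2 less_imp_le natmul_add_nat)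
      then have "natmul (i - j) x = 0" using ij by simp
      then show ?thesis using T ij by (intro exI[of _ "i - j"]) auto
    qed
  qed
  have "natmul (fact c) x = 0" for x :: 'a
  proof -
    obtain d where d: "0 < d" "d \<le> c" "natmul d x = 0" using per by blast
    then have "d dvd fact c" by (intro dvd_fact) auto
    then obtain m where "fact c = m * d" by (metis dvd_div_mult_self)
    then show ?thesis by (simp add: natmul_mult d)
  qed
  then show ?thesis by (intro exI[of _ "fact c"]) auto
qed

lemma exponent_props:
  assumes "n = group_exponent TYPE('a::{ab_group_add,finite})"
  shows "n > 0" "natmul n (x::'a) = 0" "0 < m \<Longrightarrow> m < n \<Longrightarrow> \<exists>y::'a. natmul m y \<noteq> 0"
proof -
  have E: "\<exists>N>0. \<forall>x::'a. natmul N x = 0" by (rule exists_annihilator)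
  have L: "n > 0 \<and> (\<forall>x::'a. natmul n x = 0)"
    unfolding assms group_exponent_def using E by (rule LeastI_ex)
  then show "n > 0" "natmul n x = 0" by auto
  show "\<exists>y::'a. natmul m y \<noteq> 0" if "0 < m" "m < n"
  proof (rule ccontr)
    assume "\<not> ?thesis"
    then have "m > 0 \<and> (\<forall>x::'a. natmul m x = 0)" using that by auto
    then have "n \<le> m" unfolding assms group_exponent_def by (rule Least_le)
    then show False using that by simp
  qed
qed


context
  fixes q :: "'a::ab_group_add \<Rightarrow> 'k::field"
  assumes Q: "quadratic_form q"
begin

lemma q_nz: "q x \<noteq> 0" using Q by (simp add: quadratic_form_def)
lemma q_even: "q (- x) = q x" using Q by (simp add: quadratic_form_def)
lemma B_addl: "assoc_bilin q (x + y) z = assoc_bilin q x z * assoc_bilin q y z"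
  using Q by (simp add: quadratic_form_def)
lemma B_addr: "assoc_bilin q x (y + z) = assoc_bilin q x y * assoc_bilin q x z"
  using Q unfolding quadratic_form_def by blast
lemma B_nz: "assoc_bilin q x y \<noteq> 0"
  by (simp add: assoc_bilin_def q_nz)
lemma B_sym: "assoc_bilin q x y = assoc_bilin q y x"
  by (simp add: assoc_bilin_def add.commute mult.commute)
lemma B_0l[simp]: "assoc_bilin q 0 y = 1"
proof -
  have "assoc_bilin q 0 y = assoc_bilin q 0 y * assoc_bilin q 0 y"
    using B_addl[of 0 0 y] by simp
  then show ?thesis using B_nz[of 0 y] by simp
qed
lemma B_0r[simp]: "assoc_bilin q y 0 = 1"
  using B_0l B_sym by metis
lemma q_0[simp]: "q 0 = 1"
proof -
  have "assoc_bilin q 0 0 = 1" by simp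
  then have "q 0 / (q 0 * q 0) = 1" by (simp add: assoc_bilin_def)
  then show ?thesis using q_nz[of 0] by (simp add: field_simps)
qed
lemma q_add: "q (x + y) = q x * q y * assoc_bilin q x y"
  using q_nz[of x] q_nz[of y] by (simp add: assoc_bilin_def)
lemma B_self: "assoc_bilin q x x = q x ^ 2"
proof -
  have "assoc_bilin q x x * assoc_bilin q x (- x) = 1"
    using B_addr[of x x "- x"] by simp
  moreover have "assoc_bilin q x (- x) = 1 / (q x * q x)"
    by (simp add: assoc_bilin_def q_even)
  ultimately show ?thesis using q_nz[of x] by (simp add: field_simps power2_eq_square)
qed
lemma B_natmul_l: "assoc_bilin q (natmul k x) y = assoc_bilin q x y ^ k"
  by (induction k) (simp_all add: natmul_Suc B_addl)
lemma B_natmul_r: "assoc_bilin q y (natmul k x) = assoc_bilin q y x ^ k"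
  using B_natmul_l B_sym by metis
lemma B_neg_l: "assoc_bilin q (- x) y * assoc_bilin q x y = 1"
  using B_addl[of "- x" x y] by simp
lemma q_natmul_iso: "q x = 1 \<Longrightarrow> q (natmul k x) = 1"
  by (induction k) (simp_all add: natmul_Suc q_add B_natmul_r B_self)
lemma B_pow_ann: "natmul n x = 0 \<Longrightarrow> assoc_bilin q x y ^ n = 1"
  using B_natmul_l[of n x y] by simp
lemma B_pow_ann_r: "natmul n x = 0 \<Longrightarrow> assoc_bilin q y x ^ n = 1"
  using B_pow_ann B_sym by metis

lemma kernel_subgroup: "is_subgroup {z. assoc_bilin q u z = 1}"
proof -
  have "assoc_bilin q u (- z) = 1" if "assoc_bilin q u z = 1" for z
    using B_neg_l[of z u] that B_sym[of u z] B_sym[of u "- z"] by simp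
  then show ?thesis unfolding is_subgroup_def by (auto simp: B_addr)
qed

end

lemma natmul_kernel_subgroup: "is_subgroup {x::'a::ab_group_add. natmul m x = 0}"
  unfolding is_subgroup_def by (auto simp: natmul_distrib natmul_neg)


lemma pow_gcd_one:
  fixes w :: "'k::field"
  assumes "w ^ a = 1" "w ^ b = 1" "a \<noteq> 0"
  shows "w ^ gcd a b = 1"
proof -
  obtain u v where uv: "a * u = b * v + gcd a b" using bezout_nat[OF assms(3)] by blast
  have "1 = w ^ (a * u)" by (simp add: power_mult assms)
  also have "\<dots> = (w ^ b) ^ v * w ^ gcd a b" by (simp add: uv power_add power_mult)
  finally show ?thesis using assms by simp
qed

lemma L1:
  fixes w :: "'k::field"
  assumes "w ^ n = 1" "r dvd n" "w ^ (n div r) \<noteq> 1" "coprime c r"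
  shows "w ^ (c * (n div r)) \<noteq> 1"
proof
  assume H: "w ^ (c * (n div r)) = 1"
  obtain k where n: "n = r * k" using assms(2) by blast
  show False
  proof (cases "r = 0")
    case True
    then show False using assms n by simp
  next
    case r0: False
    then have nk: "n div r = k" using n by simp
    have c0: "c \<noteq> 0"
    proof
      assume "c = 0"
      then have "r = 1" using assms(4) by simp
      then show False using assms by simp
    qed
    have "w ^ gcd (c * k) n = 1" using pow_gcd_one[of w "c*k" n] H assms(1) nk c0 r0 n
      by (cases "k = 0") auto
    moreover have "gcd (c * k) n = k"
    proof -
      have "gcd (c * k) (r * k) = gcd c r * k" by (simp add: gcd_mult_distrib_nat mult.commute)
      then show ?thesis using assms(4) n by simp
    qed
    ultimately show False using assms(3) nk by simp
  qed
qed

lemma L2: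
  fixes w :: "'k::field"
  assumes "w ^ n = 1" "n > 0" "\<And>r. prime r \<Longrightarrow> r dvd n \<Longrightarrow> w ^ (n div r) \<noteq> 1"
  shows "primitive_root n w"
  unfolding primitive_root_def
proof (intro conjI allI impI)
  show "w ^ n = 1" by fact
  fix m assume m: "0 < m \<and> m < n"
  show "w ^ m \<noteq> 1"
  proof
    assume wm: "w ^ m = 1"
    define g where "g = gcd m n"
    have wg: "w ^ g = 1" unfolding g_def using pow_gcd_one[of w m n] wm assms m by simp
    have gn: "g dvd n" "g \<le> m" "g > 0" using m by (auto simp: g_def intro: gcd_le1_nat)
    obtain j where nj: "n = g * j" using gn by blast
    have "j \<noteq> 1" using nj gn m by auto
    then obtain r where r: "prime r" "r dvd j" using prime_factor_nat by blast
    then obtain i where ji: "j = r * i" by blast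
    have rn: "r dvd n" using nj ji by simp
    have "n div r = g * i" using nj ji r by (simp add: prime_gt_0_nat)
    then have "w ^ (n div r) = 1" by (simp add: power_mult wg)
    then show False using assms(3)[OF r(1) rn] by simp
  qed
qed

lemma roots_are_powers:
  fixes z w :: "'k::field"
  assumes "primitive_root n z" "n > 0" "w ^ n = 1"
  shows "\<exists>k. w = z ^ k"
proof -
  define p :: "'k poly" where "p = monom 1 n + [:-1:]"
  have pr: "poly p x = x ^ n - 1" for x by (simp add: p_def poly_monom)
  have dp: "degree p = n" using assms(2) unfolding p_def
    by (subst degree_add_eq_left) (auto simp: degree_monom_eq)
  have p0: "p \<noteq> 0" using dp assms(2) by auto
  have R: "{x. poly p x = 0} = {x. x ^ n = 1}" by (simp add: pr)
  have cardR: "card {x::'k. x ^ n = 1} \<le> n" using card_poly_roots_bound[OF p0] dp R by simp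
  have finR: "finite {x::'k. x ^ n = 1}" using poly_roots_finite[OF p0] R by simp
  have inj: "inj_on (\<lambda>i. z ^ i) {..<n}"
  proof (rule inj_onI)
    fix i j assume ij: "i \<in> {..<n}" "j \<in> {..<n}" "z ^ i = z ^ j"
    have z0: "z \<noteq> 0" using assms(1,2) unfolding primitive_root_def by (metis zero_neq_one zero_power)
    show "i = j"
    proof (rule ccontr)
      assume "i \<noteq> j"
      then consider "i < j" | "j < i" by linarith
      then show False
      proof cases
        case 1
        then have "z ^ j = z ^ (j - i) * z ^ i" by (simp add: power_add[symmetric])
        then have "z ^ (j - i) = 1" using ij z0 by simp
        then show False using assms(1) 1 ij unfolding primitive_root_def by auto
      next
        case 2
        then have "z ^ i = z ^ (i - j) * z ^ j" by (simp add: power_add[symmetric])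
        then have "z ^ (i - j) = 1" using ij z0 by simp
        then show False using assms(1) 2 ij unfolding primitive_root_def by auto
      qed
    qed
  qed
  have sub: "(\<lambda>i. z ^ i) ` {..<n} \<subseteq> {x. x ^ n = 1}"
  proof
    fix x assume "x \<in> (\<lambda>i. z ^ i) ` {..<n}"
    then obtain i where "x = z ^ i" by blast
    then have "x ^ n = (z ^ n) ^ i" by (simp add: power_mult[symmetric] mult.commute)
    then show "x \<in> {x. x ^ n = 1}" using assms(1) by (simp add: primitive_root_def)
  qed
  have "card ((\<lambda>i. z ^ i) ` {..<n}) = n" using card_image[OF inj] by simp
  then have "(\<lambda>i. z ^ i) ` {..<n} = {x. x ^ n = 1}"
    using card_subset_eq[OF finR sub] cardR card_mono[OF finR sub] by simp
  then show ?thesis using assms(3) by blast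
qed


context
  fixes q :: "'a::{ab_group_add,finite} \<Rightarrow> 'k::field" and n :: nat
  assumes Q: "quadratic_form q" and ND: "nondegenerate q"
    and IG: "isotropically_generated q"
    and NE: "n = group_exponent TYPE('a)"
begin

lemma all_in: "is_subgroup H \<Longrightarrow> {x. q x = 1} \<subseteq> H \<Longrightarrow> x \<in> H"
  using gen_least[of H "{x. q x = 1}"] IG unfolding isotropically_generated_def by auto

lemma npos: "n > 0" using exponent_props(1)[OF NE] .
lemma nann: "natmul n (x::'a) = 0" using exponent_props(2)[OF NE] .

lemma Bn: "assoc_bilin q x y ^ n = 1"
  using B_pow_ann[OF Q nann] .

lemma qn: "q x ^ n = 1"
proof -
  have "is_subgroup {x. q x ^ n = 1}"
    unfolding is_subgroup_def
    by (auto simp: q_add[OF Q] power_mult_distrib Bn q_even[OF Q] q_0[OF Q])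
  then have "x \<in> {x. q x ^ n = 1}" by (rule all_in) auto
  then show ?thesis by simp
qed

lemma single:
  assumes "prime r" "r dvd n"
  shows "\<exists>s t. q s = 1 \<and> q t = 1 \<and> assoc_bilin q s t ^ (n div r) \<noteq> 1"
proof -
  have r1: "r > 1" using assms prime_gt_1_nat by blast
  have rn: "r \<le> n" using assms(2) npos by (simp add: dvd_imp_le)
  have m1: "0 < n div r" using rn r1 by (simp add: div_greater_zero_iff)
  have m2: "n div r < n" using r1 npos by simp
  have ex: "\<exists>s. q s = 1 \<and> natmul (n div r) s \<noteq> 0"
  proof (rule ccontr)
    assume "\<not> ?thesis"
    then have sub: "{x. q x = 1} \<subseteq> {x. natmul (n div r) x = 0}" by auto
    have "natmul (n div r) x = 0" for x :: 'a
    proof -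
      have "x \<in> {x. natmul (n div r) x = 0}" by (rule all_in[OF natmul_kernel_subgroup sub])
      then show ?thesis by simp
    qed
    then show False using exponent_props(3)[OF NE m1 m2] by blast
  qed
  then obtain s where s: "q s = 1" "natmul (n div r) s \<noteq> 0" by blast
  define u where "u = natmul (n div r) s"
  obtain z where "assoc_bilin q u z \<noteq> 1" using ND s(2) unfolding nondegenerate_def u_def by blast
  have ex2: "\<exists>t. q t = 1 \<and> assoc_bilin q u t \<noteq> 1"
  proof (rule ccontr)
    assume "\<not> ?thesis"
    then have sub: "{x. q x = 1} \<subseteq> {z. assoc_bilin q u z = 1}" by auto
    have "z \<in> {z. assoc_bilin q u z = 1}" by (rule all_in[OF kernel_subgroup[OF Q] sub])
    then have "assoc_bilin q u z = 1" by simp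
    then show False using \<open>assoc_bilin q u z \<noteq> 1\<close> by blast
  qed
  then obtain t where t: "q t = 1" "assoc_bilin q u t \<noteq> 1" by blast
  have "assoc_bilin q u t = assoc_bilin q s t ^ (n div r)"
    unfolding u_def by (rule B_natmul_l[OF Q])
  then show ?thesis using s t by auto
qed

lemma combine:
  assumes xy: "q x = 1" "q y = 1" "\<forall>r'\<in>R. prime r' \<and> r' dvd n \<and> assoc_bilin q x y ^ (n div r') \<noteq> 1"
    and st: "q s = 1" "q t = 1" "assoc_bilin q s t ^ (n div r) \<noteq> 1"
    and r: "prime r" "r dvd n" "r \<notin> R"
  shows "\<exists>x' y'. q x' = 1 \<and> q y' = 1 \<and>
     (\<forall>r'\<in>insert r R. prime r' \<and> r' dvd n \<and> assoc_bilin q x' y' ^ (n div r') \<noteq> 1)"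
proof -
  define P where "P = r ^ multiplicity r n"
  define C where "C = n div P"
  have n0: "n \<noteq> 0" using npos by simp
  have nPC: "n = P * C" unfolding C_def P_def using multiplicity_dvd[of r n] by simp
  have rC: "\<not> r dvd C" unfolding C_def P_def
    using multiplicity_decompose[OF n0, of r] r(1) prime_gt_1_nat[OF r(1)] by simp
  have mpos: "multiplicity r n > 0"
    using multiplicity_gt_zero_iff[OF n0, of r] r prime_gt_1_nat[OF r(1)] by simp
  have rP: "r dvd P" unfolding P_def using mpos by (simp add: dvd_power)
  define x' where "x' = natmul P x + natmul C s"
  define y' where "y' = natmul P y + natmul C t"
  let ?B = "assoc_bilin q"
  have orth: "?B (natmul P a) (natmul C b) = 1" for a b
  proof -
    have "?B (natmul P a) (natmul C b) = (?B a b ^ C) ^ P"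
      by (simp add: B_natmul_l[OF Q] B_natmul_r[OF Q] power_mult[symmetric] mult.commute)
    also have "\<dots> = ?B a b ^ n" by (simp add: power_mult[symmetric] nPC mult.commute)
    also have "\<dots> = 1" by (rule Bn)
    finally show ?thesis .
  qed
  have orth2: "?B (natmul C a) (natmul P b) = 1" for a b
    using orth B_sym[OF Q] by metis
  have qx': "q x' = 1" unfolding x'_def
    by (simp add: q_add[OF Q] q_natmul_iso[OF Q] xy st orth)
  have qy': "q y' = 1" unfolding y'_def
    by (simp add: q_add[OF Q] q_natmul_iso[OF Q] xy st orth)
  have Bxy: "?B x' y' = ?B x y ^ (P * P) * ?B s t ^ (C * C)"
    unfolding x'_def y'_def
    apply (simp only: B_addl[OF Q] B_addr[OF Q] orth orth2 mult_1_right mult_1_left)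
    apply (simp add: B_natmul_l[OF Q] B_natmul_r[OF Q] power_mult)
    done
  have "prime r' \<and> r' dvd n \<and> ?B x' y' ^ (n div r') \<noteq> 1" if r': "r' \<in> insert r R" for r'
  proof (cases "r' = r")
    case True
    obtain k where k: "P = r * k" using rP by blast
    have r0: "r > 0" using r(1) prime_gt_0_nat by blast
    have "n div r = k * C" using k nPC r0 by simp
    then have "P * (n div r) = n * k" using k nPC by simp
    then have "n dvd P * (n div r)" by simp
    then obtain m where m: "P * (n div r) = n * m" by blast
    have "(?B x y ^ (P * P)) ^ (n div r) = ?B x y ^ (P * (P * (n div r)))"
      by (simp add: power_mult[symmetric] mult.assoc)
    also have "\<dots> = (?B x y ^ n) ^ (m * P)"
    proof -
      have "P * (P * (n div r)) = n * (m * P)" using m by (metis mult.commute mult.left_commute)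
      then show ?thesis by (simp only: power_mult)
    qed
    finally have e1: "(?B x y ^ (P * P)) ^ (n div r) = 1" by (simp add: Bn)
    have "coprime r C" using rC r(1) by (rule prime_imp_coprime[rotated])
    then have cop: "coprime (C * C) r" by (simp add: coprime_commute)
    have e2: "(?B s t ^ (C * C)) ^ (n div r) \<noteq> 1"
      using L1[OF Bn r(2) st(3) cop] by (simp add: power_mult)
    show ?thesis using True r e1 e2 by (simp add: Bxy power_mult_distrib)
  next
    case False
    then have r'R: "r' \<in> R" using r' by simp
    then have pr': "prime r'" "r' dvd n" "?B x y ^ (n div r') \<noteq> 1" using xy(3) by auto
    have "\<not> r' dvd P"
    proof
      assume "r' dvd P"
      then have "r' dvd r" unfolding P_def using pr'(1) prime_dvd_power by blast
      then show False using primes_dvd_imp_eq[OF pr'(1) r(1)] False by simp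
    qed
    then have r'C: "r' dvd C" using pr' nPC by (metis prime_dvd_mult_iff)
    obtain k where k: "C = r' * k" using r'C by blast
    have r0: "r' > 0" using pr'(1) prime_gt_0_nat by blast
    have "n div r' = P * k" using k nPC r0 by simp
    then have "C * (n div r') = n * k" using k nPC by simp
    then have "n dvd C * (n div r')" by simp
    then obtain m where m: "C * (n div r') = n * m" by blast
    have "(?B s t ^ (C * C)) ^ (n div r') = ?B s t ^ (C * (C * (n div r')))"
      by (simp add: power_mult[symmetric] mult.assoc)
    also have "\<dots> = (?B s t ^ n) ^ (m * C)"
    proof -
      have "C * (C * (n div r')) = n * (m * C)" using m by (metis mult.commute mult.left_commute)
      then show ?thesis by (simp only: power_mult)
    qed
    finally have e2: "(?B s t ^ (C * C)) ^ (n div r') = 1" by (simp add: Bn)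
    have "coprime r' P" using \<open>\<not> r' dvd P\<close> pr'(1) by (rule prime_imp_coprime[rotated])
    then have cop: "coprime (P * P) r'" by (simp add: coprime_commute)
    have e1: "(?B x y ^ (P * P)) ^ (n div r') \<noteq> 1"
      using L1[OF Bn pr'(2) pr'(3) cop] by (simp add: power_mult)
    show ?thesis using pr' e1 e2 by (simp add: Bxy power_mult_distrib)
  qed
  then show ?thesis using qx' qy' by blast
qed

end


lemma prim_inj:
  fixes z :: "'k::field"
  assumes "primitive_root n z" "i < n" "j < n" "z ^ i = z ^ j"
  shows "i = j"
proof (rule ccontr)
  have z0: "z \<noteq> 0"
  proof
    assume "z = 0"
    then have "z ^ n = 0" using assms(2) by simp
    then show False using assms(1) unfolding primitive_root_def by simp
  qed
  assume "i \<noteq> j"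
  then consider "i < j" | "j < i" by linarith
  then show False
  proof cases
    case 1
    then have "z ^ j = z ^ (j - i) * z ^ i" by (simp add: power_add[symmetric])
    then have "z ^ (j - i) = 1" using assms z0 by simp
    then show False using assms 1 unfolding primitive_root_def by auto
  next
    case 2
    then have "z ^ i = z ^ (i - j) * z ^ j" by (simp add: power_add[symmetric])
    then have "z ^ (i - j) = 1" using assms z0 by simp
    then show False using assms 2 unfolding primitive_root_def by auto
  qed
qed

context
  fixes q :: "'a::{ab_group_add,finite} \<Rightarrow> 'k::field" and n :: nat
  assumes Q: "quadratic_form q" and ND: "nondegenerate q"
    and IG: "isotropically_generated q"
    and NE: "n = group_exponent TYPE('a)"
begin

lemma good_pair:
  "\<exists>x y. q x = 1 \<and> q y = 1 \<and> (\<forall>r'\<in>{r. prime r \<and> r dvd n}. prime r' \<and> r' dvd n \<and>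
      assoc_bilin q x y ^ (n div r') \<noteq> 1)"
proof -
  let ?A = "{r. prime r \<and> r dvd n}"
  have fin: "finite ?A"
    by (rule finite_subset[of _ "{..n}"]) (auto simp: dvd_imp_le npos[OF Q ND IG NE])
  have "\<exists>x y. q x = 1 \<and> q y = 1 \<and> (\<forall>r'\<in>R. prime r' \<and> r' dvd n \<and>
      assoc_bilin q x y ^ (n div r') \<noteq> 1)" if "R \<subseteq> ?A" for R
    using finite_subset[OF that fin] that
  proof (induction R rule: finite_subset_induct)
    case empty
    show ?case by (intro exI[of _ 0]) (simp add: q_0[OF Q])
  next
    case (insert r R)
    then obtain x y where xy: "q x = 1" "q y = 1" "\<forall>r'\<in>R. prime r' \<and> r' dvd n \<and>
      assoc_bilin q x y ^ (n div r') \<noteq> 1" by blast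
    have rr: "prime r" "r dvd n" using insert by auto
    obtain s t where st: "q s = 1" "q t = 1" "assoc_bilin q s t ^ (n div r) \<noteq> 1"
      using single[OF Q ND IG NE rr] by blast
    have "r \<notin> R" using insert by simp
    from combine[OF Q ND IG NE xy st rr this] show ?case by blast
  qed
  then show ?thesis using fin by blast
qed

lemma forward:
  "(\<forall>x. q x ^ n = 1) \<and>
   (\<exists>\<zeta>. primitive_root n \<zeta> \<and> contains_metric_subgroup_iso q n (hyperbolic_form \<zeta>))"
proof -
  have n0: "n > 0" by (rule npos[OF Q ND IG NE])
  obtain x y where xy: "q x = 1" "q y = 1"
    "\<forall>r'\<in>{r. prime r \<and> r dvd n}. prime r' \<and> r' dvd n \<and> assoc_bilin q x y ^ (n div r') \<noteq> 1"
    using good_pair by blast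
  define z where "z = assoc_bilin q x y"
  have prim: "primitive_root n z"
  proof (rule L2)
    show "z ^ n = 1" unfolding z_def by (rule Bn[OF Q ND IG NE])
    show "n > 0" by (rule n0)
    fix r assume "prime r" "r dvd n"
    then show "z ^ (n div r) \<noteq> 1" using xy(3) unfolding z_def by blast
  qed
  have xx: "assoc_bilin q x x = 1" using B_self[OF Q, of x] xy by simp
  have yy: "assoc_bilin q y y = 1" using B_self[OF Q, of y] xy by simp
  have yx: "assoc_bilin q y x = z" using B_sym[OF Q] z_def by metis
  have nx: "natmul n x = 0" and ny: "natmul n y = 0" using nann[OF Q ND IG NE] by auto
  define \<phi> where "\<phi> = (\<lambda>(a::nat, b::nat). natmul a x + natmul b y)"
  define H where "H = \<phi> ` ({..<n} \<times> {..<n})"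
  have hom: "\<phi> ((a + c) mod n, (b + d) mod n) = \<phi> (a, b) + \<phi> (c, d)" for a b c d
  proof -
    have "\<phi> ((a + c) mod n, (b + d) mod n) = natmul (a + c) x + natmul (b + d) y"
      unfolding \<phi>_def using natmul_mod[OF nx, of "a + c"] natmul_mod[OF ny, of "b + d"] by simp
    then show ?thesis unfolding \<phi>_def by (simp add: natmul_add_nat algebra_simps)
  qed
  have negx: "natmul ((n - a) mod n) x = - natmul a x" if "a < n" for a
  proof -
    have "natmul ((n - a) mod n) x = natmul (n - a) x" using natmul_mod[OF nx] by simp
    moreover have "natmul (n - a) x + natmul a x = 0"
      using that nx natmul_add_nat[of "n - a" a x] by simp
    ultimately show ?thesis by (simp add: eq_neg_iff_add_eq_0)
  qed
  have negy: "natmul ((n - a) mod n) y = - natmul a y" if "a < n" for a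
  proof -
    have "natmul ((n - a) mod n) y = natmul (n - a) y" using natmul_mod[OF ny] by simp
    moreover have "natmul (n - a) y + natmul a y = 0"
      using that ny natmul_add_nat[of "n - a" a y] by simp
    ultimately show ?thesis by (simp add: eq_neg_iff_add_eq_0)
  qed
  have sub: "is_subgroup H"
    unfolding is_subgroup_def
  proof (intro conjI ballI)
    show "0 \<in> H" unfolding H_def using n0 by (intro image_eqI[of _ _ "(0, 0)"]) (auto simp: \<phi>_def)
  next
    fix u v assume "u \<in> H" "v \<in> H"
    then obtain a b c d where "a < n" "b < n" "c < n" "d < n" "u = \<phi> (a, b)" "v = \<phi> (c, d)"
      unfolding H_def by auto
    then show "u + v \<in> H" unfolding H_def using hom[of a c b d] n0
      by (intro image_eqI[of _ _ "((a + c) mod n, (b + d) mod n)"]) auto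
  next
    fix u assume "u \<in> H"
    then obtain a b where ab: "a < n" "b < n" "u = \<phi> (a, b)" unfolding H_def by auto
    then have "- u = \<phi> ((n - a) mod n, (n - b) mod n)"
      unfolding \<phi>_def by (simp add: negx negy)
    then show "- u \<in> H" unfolding H_def using n0 by auto
  qed
  have Bx: "assoc_bilin q (\<phi> (a, b)) x = z ^ b" for a b
    unfolding \<phi>_def by (simp add: B_addl[OF Q] B_natmul_l[OF Q] xx yx)
  have By: "assoc_bilin q (\<phi> (a, b)) y = z ^ a" for a b
    unfolding \<phi>_def by (simp add: B_addl[OF Q] B_natmul_l[OF Q] yy z_def)
  have inj: "inj_on \<phi> ({..<n} \<times> {..<n})"
  proof (rule inj_onI)
    fix u v assume uv: "u \<in> {..<n} \<times> {..<n}" "v \<in> {..<n} \<times> {..<n}" "\<phi> u = \<phi> v"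
    obtain a b where u: "u = (a, b)" by force
    obtain c d where v: "v = (c, d)" by force
    have "z ^ b = z ^ d" using Bx[of a b] Bx[of c d] uv u v by simp
    then have "b = d" using prim_inj[OF prim] uv u v by auto
    moreover have "z ^ a = z ^ c" using By[of a b] By[of c d] uv u v by simp
    then have "a = c" using prim_inj[OF prim] uv u v by auto
    ultimately show "u = v" using u v by simp
  qed
  have qphi: "q (\<phi> (a, b)) = hyperbolic_form z (a, b)" for a b
    unfolding \<phi>_def hyperbolic_form_def
    by (simp add: q_add[OF Q] q_natmul_iso[OF Q] xy B_natmul_l[OF Q] B_natmul_r[OF Q]
        z_def power_mult[symmetric] mult.commute)
  have "contains_metric_subgroup_iso q n (hyperbolic_form z)"
    unfolding contains_metric_subgroup_iso_def
    apply (rule exI[of _ H], rule exI[of _ \<phi>])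
    using sub inj hom qphi by (auto simp: H_def bij_betw_def)
  then show ?thesis using prim qn[OF Q ND IG NE] by blast
qed

end


lemma arith_choice:
  fixes n k s t :: nat
  assumes "n > 0"
  shows "\<exists>a<n. \<exists>b<n. n dvd (k + a * b + s * a + t * b)"
proof -
  define A :: int where "A = (1 - int t) mod int n"
  define Bb :: int where "Bb = (int s * int t - int k - int s) mod int n"
  have A0: "0 \<le> A" "A < int n" using assms by (auto simp: A_def)
  have B0: "0 \<le> Bb" "Bb < int n" using assms by (auto simp: Bb_def)
  define u where "u = (1 - int t) div int n"
  define v where "v = (int s * int t - int k - int s) div int n"
  have Ae: "A = 1 - int t - int n * u" unfolding A_def u_def by (simp add: minus_div_mult_eq_mod[symmetric])
  have Be: "Bb = int s * int t - int k - int s - int n * v"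
    unfolding Bb_def v_def by (simp add: minus_div_mult_eq_mod[symmetric])
  define a where "a = nat A"
  define b where "b = nat Bb"
  have ia: "int a = A" and ib: "int b = Bb" using A0 B0 by (auto simp: a_def b_def)
  have "int (k + a * b + s * a + t * b) = int k + A * Bb + int s * A + int t * Bb"
    using ia ib by simp
  also have "\<dots> = int n * (- v - u * (int s * int t - int k - int n * v))"
    unfolding Ae Be by (simp add: algebra_simps)
  finally have "int n dvd int (k + a * b + s * a + t * b)" by (rule dvdI)
  then have "n dvd (k + a * b + s * a + t * b)" by (simp only: of_nat_dvd_iff)
  moreover have "a < n" "b < n" using ia ib A0 B0 by auto
  ultimately show ?thesis by blast
qed

context
  fixes q :: "'a::{ab_group_add,finite} \<Rightarrow> 'k::field" and n :: nat
    and z :: 'k and H :: "'a set" and \<phi> :: "nat \<times> nat \<Rightarrow> 'a"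
  assumes Q: "quadratic_form q"
    and NE: "n = group_exponent TYPE('a)"
    and QN: "\<forall>x. q x ^ n = 1"
    and PR: "primitive_root n z"
    and hom: "\<forall>a\<in>{..<n}. \<forall>b\<in>{..<n}. \<forall>c\<in>{..<n}. \<forall>d\<in>{..<n}.
            \<phi> ((a + c) mod n, (b + d) mod n) = \<phi> (a, b) + \<phi> (c, d)"
    and qphi: "\<forall>a\<in>{..<n}. \<forall>b\<in>{..<n}. q (\<phi> (a, b)) = hyperbolic_form z (a, b)"
begin

lemma hom': "a < n \<Longrightarrow> b < n \<Longrightarrow> c < n \<Longrightarrow> d < n \<Longrightarrow>
   \<phi> ((a + c) mod n, (b + d) mod n) = \<phi> (a, b) + \<phi> (c, d)"
proof -
  assume "a < n" "b < n" "c < n" "d < n"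
  then have i: "a \<in> {..<n}" "b \<in> {..<n}" "c \<in> {..<n}" "d \<in> {..<n}" by auto
  show ?thesis by (rule bspec[OF bspec[OF bspec[OF bspec[OF hom i(1)] i(2)] i(3)] i(4)])
qed

lemma qphi': "a < n \<Longrightarrow> b < n \<Longrightarrow> q (\<phi> (a, b)) = z ^ (a * b)"
proof -
  assume "a < n" "b < n"
  then have "a \<in> {..<n}" "b \<in> {..<n}" by auto
  then have "q (\<phi> (a, b)) = hyperbolic_form z (a, b)" by (rule bspec[OF bspec[OF qphi]])
  then show ?thesis by (simp add: hyperbolic_form_def)
qed

lemma backward: "isotropically_generated q"
proof -
  let ?G = "generated_subgroup {x. q x = 1}"
  have n0: "n > 0" using exponent_props(1)[OF NE] .
  have G: "is_subgroup ?G" by (rule gen_sub)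
  have iso_G: "q x = 1 \<Longrightarrow> x \<in> ?G" for x by (rule subsetD[OF gen_incl]) simp
  have allG: "x \<in> ?G" for x
  proof (cases "n = 1")
    case True
    have "natmul 1 x = 0" using exponent_props(2)[OF NE, of x] True by simp
    then have "x = 0" by (simp add: natmul_Suc)
    then show ?thesis using iso_G[of 0] q_0[OF Q] by simp
  next
    case False
    then have n2: "n \<ge> 2" using n0 by simp
    define e1 where "e1 = \<phi> (1, 0)"
    define e2 where "e2 = \<phi> (0, 1)"
    have p00: "\<phi> (0, 0) = 0"
      using hom'[of 0 0 0 0] n0 by simp
    have pa0: "\<phi> (a, 0) = natmul a e1" if "a < n" for a
      using that
    proof (induction a)
      case 0 then show ?case by (simp add: p00)
    next
      case (Suc a)
      have "\<phi> ((a + 1) mod n, (0 + 0) mod n) = \<phi> (a, 0) + \<phi> (1, 0)"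
        using hom'[of a 0 1 0] Suc.prems n2 by simp
      then show ?case using Suc by (simp add: natmul_Suc e1_def add.commute)
    qed
    have p0b: "\<phi> (0, b) = natmul b e2" if "b < n" for b
      using that
    proof (induction b)
      case 0 then show ?case by (simp add: p00)
    next
      case (Suc b)
      have "\<phi> ((0 + 0) mod n, (b + 1) mod n) = \<phi> (0, b) + \<phi> (0, 1)"
        using hom'[of 0 b 0 1] Suc.prems n2 by simp
      then show ?case using Suc by (simp add: natmul_Suc e2_def add.commute)
    qed
    have pab: "\<phi> (a, b) = natmul a e1 + natmul b e2" if "a < n" "b < n" for a b
    proof -
      have "\<phi> ((a + 0) mod n, (0 + b) mod n) = \<phi> (a, 0) + \<phi> (0, b)"
        using hom'[of a 0 0 b] that n0 by simp
      then show ?thesis using that pa0 p0b by simp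
    qed
    have qe1: "q e1 = 1" unfolding e1_def using qphi'[of 1 0] n2 by simp
    have qe2: "q e2 = 1" unfolding e2_def using qphi'[of 0 1] n2 by simp
    have phiG: "\<phi> (a, b) \<in> ?G" if "a < n" "b < n" for a b
      using pab[OF that] G iso_G[OF qe1] iso_G[OF qe2] subgroup_natmul[OF G]
      unfolding is_subgroup_def by auto
    obtain k where k: "q x = z ^ k" using roots_are_powers[OF PR n0] QN by blast
    have "assoc_bilin q x e1 ^ n = 1"
      by (rule B_pow_ann_r[OF Q exponent_props(2)[OF NE]])
    then obtain s where s: "assoc_bilin q x e1 = z ^ s" using roots_are_powers[OF PR n0] by blast
    have "assoc_bilin q x e2 ^ n = 1"
      by (rule B_pow_ann_r[OF Q exponent_props(2)[OF NE]])
    then obtain t where t: "assoc_bilin q x e2 = z ^ t" using roots_are_powers[OF PR n0] by blast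
    obtain a b where ab: "a < n" "b < n" "n dvd (k + a * b + s * a + t * b)"
      using arith_choice[OF n0] by blast
    then obtain m where m: "k + a * b + s * a + t * b = n * m" by blast
    have zn: "z ^ n = 1" using PR by (simp add: primitive_root_def)
    have "q (x + \<phi> (a, b)) = q x * q (\<phi> (a, b)) * assoc_bilin q x (\<phi> (a, b))"
      by (rule q_add[OF Q])
    also have "\<dots> = z ^ k * z ^ (a * b) * ((z ^ s) ^ a * (z ^ t) ^ b)"
      using qphi'[OF ab(1,2)] ab by (simp add: k pab B_addr[OF Q] B_natmul_r[OF Q] s t)
    also have "\<dots> = z ^ (k + a * b + s * a + t * b)"
      by (simp add: power_add power_mult)
    also have "\<dots> = 1" by (simp add: m power_mult zn)
    finally have "x + \<phi> (a, b) \<in> ?G" by (rule iso_G)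
    moreover have "- \<phi> (a, b) \<in> ?G" using phiG[OF ab(1,2)] G unfolding is_subgroup_def by blast
    ultimately have "(x + \<phi> (a, b)) + - \<phi> (a, b) \<in> ?G" using G unfolding is_subgroup_def by blast
    then show ?thesis by simp
  qed
  then show ?thesis unfolding isotropically_generated_def by auto
qed

end


theorem theorem6p2:
  fixes q :: "'a::{ab_group_add,finite} \<Rightarrow> 'k::field_char_0"
  assumes "alg_closed TYPE('k)"
    and "metric_group q"
    and "n = group_exponent TYPE('a)"
  shows "isotropically_generated q \<longleftrightarrow>
           ((\<forall>x. q x ^ n = 1) \<and>
            (\<exists>\<zeta>. primitive_root n \<zeta> \<and> contains_metric_subgroup_iso q n (hyperbolic_form \<zeta>)))"
proof
  have Q: "quadratic_form q" and ND: "nondegenerate q"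
    using assms(2) by (auto simp: metric_group_def)
  {
    assume IG: "isotropically_generated q"
    show "(\<forall>x. q x ^ n = 1) \<and>
            (\<exists>\<zeta>. primitive_root n \<zeta> \<and> contains_metric_subgroup_iso q n (hyperbolic_form \<zeta>))"
      by (rule forward[OF Q ND IG assms(3)])
  }
  assume R: "(\<forall>x. q x ^ n = 1) \<and>
            (\<exists>\<zeta>. primitive_root n \<zeta> \<and> contains_metric_subgroup_iso q n (hyperbolic_form \<zeta>))"
  then have QN: "\<forall>x. q x ^ n = 1" by blast
  from R obtain z where PR: "primitive_root n z"
    and C: "contains_metric_subgroup_iso q n (hyperbolic_form z)" by blast
  from C obtain H \<phi> where
    hom: "\<forall>a\<in>{..<n}. \<forall>b\<in>{..<n}. \<forall>c\<in>{..<n}. \<forall>d\<in>{..<n}.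
            \<phi> ((a + c) mod n, (b + d) mod n) = \<phi> (a, b) + \<phi> (c, d)"
    and qphi: "\<forall>a\<in>{..<n}. \<forall>b\<in>{..<n}. q (\<phi> (a, b)) = hyperbolic_form z (a, b)"
    unfolding contains_metric_subgroup_iso_def by blast
  show "isotropically_generated q"
    by (rule backward[OF Q assms(3) QN PR hom qphi])
qed

end
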